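(* Let $n\ge 2$ be an integer and let $Q_{4n}=\langle x,y : x^{2n}=1,\ x^n=y^2,\ yx=x^{-1}y\rangle$ be the generalized quaternion group of order $4n$. Let $\Gamma_{Q_{4n}}$ be its non-commuting graph. Then the spectrum of the distance matrix $D(\Gamma_{Q_{4n}})$ (eigenvalues counted with multiplicity, multiplicities being added if two of the listed values coincide) consists of: (a) $-2$ with multiplicity $3n-3$; (b) $0$ with multiplicity $n-1$; (c) $3(n-1)+\sqrt{5n^2-10n+9}$ and $3(n-1)-\sqrt{5n^2-10n+9}$, each with multiplicity $1$.
   Context: For a finite non-abelian group $G$ with centre $Z(G)$, the non-commuting graph $\Gamma_G$ is the simple undirected graph with vertex set $G\setminus Z(G)$, in which two distinct vertices $u,v$ are adjacent if and only if $uv\ne vu$. For a connected graph $H$, $d_{uv}$ denotes the length of a shortest path between vertices $u$ and $v$, and the distance matrix $D(H)$ is the matrix whose $(u,v)$-entry is $d_{uv}$. *)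

theory Defs
  imports "HOL-Algebra.Generated_Groups" "Jordan_Normal_Form.Char_Poly"
begin

definition grp_center :: "('a, 'b) monoid_scheme \<Rightarrow> 'a set" where
  "grp_center G = {z \<in> carrier G. \<forall>g \<in> carrier G. z \<otimes>\<^bsub>G\<^esub> g = g \<otimes>\<^bsub>G\<^esub> z}"

definition nc_vertices :: "('a, 'b) monoid_scheme \<Rightarrow> 'a set" where
  "nc_vertices G = carrier G - grp_center G"

definition nc_adj :: "('a, 'b) monoid_scheme \<Rightarrow> 'a \<Rightarrow> 'a \<Rightarrow> bool" where
  "nc_adj G u v \<longleftrightarrow> u \<in> nc_vertices G \<and> v \<in> nc_vertices G \<and> u \<noteq> v
     \<and> u \<otimes>\<^bsub>G\<^esub> v \<noteq> v \<otimes>\<^bsub>G\<^esub> u"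

definition nc_walk :: "('a, 'b) monoid_scheme \<Rightarrow> 'a list \<Rightarrow> bool" where
  "nc_walk G p \<longleftrightarrow> p \<noteq> [] \<and> set p \<subseteq> nc_vertices G
     \<and> (\<forall>i. Suc i < length p \<longrightarrow> nc_adj G (p ! i) (p ! Suc i))"

text \<open>Distance d_uv: length of a shortest path (= shortest walk) from u to v.\<close>
definition nc_dist :: "('a, 'b) monoid_scheme \<Rightarrow> 'a \<Rightarrow> 'a \<Rightarrow> nat" where
  "nc_dist G u v = (LEAST k. \<exists>p. nc_walk G p \<and> hd p = u \<and> last p = v \<and> length p = Suc k)"

definition nc_dist_matrix :: "('a, 'b) monoid_scheme \<Rightarrow> 'a list \<Rightarrow> real mat" where
  "nc_dist_matrix G vs = mat (length vs) (length vs) (\<lambda>(i, j). real (nc_dist G (vs ! i) (vs ! j)))"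

end

theory Submission
  imports Defs
begin

definition helm :: "nat \<Rightarrow> nat \<Rightarrow> real" where
  "helm m i = (if i < m then 1 else if i = m then - real m else 0)"

lemma helm_sum_upto: "(\<Sum>i<Suc m. helm m i) = 0"
proof -
  have "(\<Sum>i<m. helm m i) = (\<Sum>i<m. 1)" by (rule sum.cong) (auto simp: helm_def)
  then show ?thesis by (simp add: helm_def)
qed

lemma helm_sum_aux: "(\<Sum>i<Suc m + k. helm m i) = 0"
  by (induction k) (simp_all add: helm_sum_upto helm_def)

lemma helm_sum: assumes "m < L" shows "(\<Sum>i<L. helm m i) = 0"
  using helm_sum_aux[of m "L - Suc m"] assms by simp

lemma helm_orth: assumes "m < m'" "m < L" shows "(\<Sum>i<L. helm m i * helm m' i) = 0"
proof -
  have "(\<Sum>i<L. helm m i * helm m' i) = (\<Sum>i<L. helm m i)"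
    by (rule sum.cong) (use assms in \<open>auto simp: helm_def\<close>)
  then show ?thesis using helm_sum assms by simp
qed

lemma helm_sq: assumes "0 < m" "m < L" shows "(\<Sum>i<L. helm m i * helm m i) > 0"
proof -
  have "helm m m * helm m m \<le> (\<Sum>i<L. helm m i * helm m i)"
    by (rule member_le_sum) (use assms in auto)
  moreover have "helm m m * helm m m > 0" using assms by (simp add: helm_def)
  ultimately show ?thesis by linarith
qed

lemma sum_add_split: "(\<Sum>r<a+(b::nat). f r) = (\<Sum>r<a. f r) + (\<Sum>k<b. f (a+k))"
  by (induction b) (simp_all add: add.assoc)

lemma sum3: "(\<Sum>r<p+2*(q::nat). f r) = (\<Sum>r<p. f r) + (\<Sum>k<q. f (p+k)) + (\<Sum>k<q. f (p+q+k))"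
  using sum_add_split[of f p "q+q"] sum_add_split[of "\<lambda>k. f (p+k)" q q]
  by (simp add: mult_2 add.assoc)

definition dd :: "nat \<Rightarrow> nat \<Rightarrow> nat \<Rightarrow> nat \<Rightarrow> real" where
  "dd p q t r = (if t = r then 0 else if t < p \<and> r < p then 2
     else if p \<le> t \<and> p \<le> r \<and> (t-p) mod q = (r-p) mod q then 2 else 1)"

definition cl :: "nat \<Rightarrow> nat \<Rightarrow> nat \<Rightarrow> nat \<Rightarrow> real" where
  "cl p q t r = (if t < p \<and> r < p \<or> p \<le> t \<and> p \<le> r \<and> (t-p) mod q = (r-p) mod q then 1 else 0)"

lemma dd_cl: "dd p q t r = 1 + cl p q t r - (if t = r then 2 else 0)"
  by (auto simp: dd_def cl_def)

lemma sum_ind: "(k0::nat) < q \<Longrightarrow> (\<Sum>k<q. (if k0 = k then 1 else 0) * g k) = (g k0 :: real)"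
proof -
  assume "k0 < q"
  have "(\<Sum>k<q. (if k0 = k then 1 else 0) * g k) = (\<Sum>k<q. if k0 = k then g k else 0)"
    by (rule sum.cong) auto
  then show ?thesis using \<open>k0 < q\<close> by simp
qed

lemma cl_sum:
  assumes t: "t < p + 2*q" and q: "q > 0"
  shows "(\<Sum>r<p+2*q. cl p q t r * s r) =
     (if t < p then (\<Sum>r<p. s r) else s (p + (t-p) mod q) + s (p+q+(t-p) mod q))"
proof (cases "t < p")
  case True
  have "(\<Sum>r<p+2*q. cl p q t r * s r) = (\<Sum>r<p. s r)"
    unfolding sum3 using True by (simp add: cl_def)
  then show ?thesis using True by simp
next
  case False
  define k0 where "k0 = (t-p) mod q"
  have k0: "k0 < q" using q by (simp add: k0_def)
  have "(\<Sum>r<p+2*q. cl p q t r * s r) = s (p + k0) + s (p+q+k0)"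
    unfolding sum3 using False k0 by (simp add: cl_def k0_def[symmetric] sum_ind)
  then show ?thesis using False by (simp add: k0_def)
qed

lemma dd_sum:
  assumes t: "t < p + 2*q" and q: "q > 0"
  shows "(\<Sum>r<p+2*q. dd p q t r * s r) = (\<Sum>r<p+2*q. s r) +
     (if t < p then (\<Sum>r<p. s r) else s (p + (t-p) mod q) + s (p+q+(t-p) mod q)) - 2 * s t"
proof -
  have "(\<Sum>r<p+2*q. dd p q t r * s r) = (\<Sum>r<p+2*q. s r + cl p q t r * s r - (if t = r then 2 * s r else 0))"
    by (rule sum.cong) (auto simp: dd_cl algebra_simps)
  also have "\<dots> = (\<Sum>r<p+2*q. s r) + (\<Sum>r<p+2*q. cl p q t r * s r) - 2 * s t"
    using t by (simp add: sum.distrib sum_subtractf)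
  finally show ?thesis using cl_sum[OF t q] by simp
qed

definition E :: "nat \<Rightarrow> nat \<Rightarrow> real \<Rightarrow> real \<Rightarrow> nat \<Rightarrow> nat \<Rightarrow> real" where
  "E h g a1 a2 j r = (if j < h then (if r < Suc h then helm (j+1) r else 0)
     else if j < h+Suc g then (if r = Suc h + (j-h) then 1 else if r = Suc h+Suc g+(j-h) then -1 else 0)
     else if j < h+Suc g+g then (if Suc h \<le> r then helm (j-(h+Suc g)+1) ((r-Suc h) mod Suc g) else 0)
     else if j = h+Suc g+g then (if r < Suc h then a1 else 1) else (if r < Suc h then a2 else 1))"

definition lam :: "nat \<Rightarrow> nat \<Rightarrow> real \<Rightarrow> real \<Rightarrow> nat \<Rightarrow> real" where
  "lam h g a1 a2 j = (if j < h+Suc g then -2 else if j < h+Suc g+g then 0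
     else if j = h+Suc g+g then real (Suc h) * a1 + 2 * real (Suc g) else real (Suc h) * a2 + 2 * real (Suc g))"

lemma j_cases:
  assumes "j < Suc h + 2 * Suc g"
  obtains (H) m where "m < h" "j = m" | (P) m where "m < Suc g" "j = h+m"
    | (G) m where "m < g" "j = h+Suc g+m" | (F1) "j = h+Suc g+g" | (F2) "j = Suc (h+Suc g+g)"
proof -
  consider "j < h" | "h \<le> j" "j < h+Suc g" | "h+Suc g \<le> j" "j < h+Suc g+g"
    | "j = h+Suc g+g" | "j = Suc (h+Suc g+g)"
  proof -
    have "j < h \<or> (h \<le> j \<and> j < h+Suc g) \<or> (h+Suc g \<le> j \<and> j < h+Suc g+g)
      \<or> j = h+Suc g+g \<or> j = Suc (h+Suc g+g)" using assms by presburger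
    then show ?thesis using that by blast
  qed
  then show ?thesis
  proof cases
    case 2 then show ?thesis using that(2)[of "j-h"] by auto
  next
    case 3 then show ?thesis using that(3)[of "j-(h+Suc g)"] by auto
  qed (use that in auto)
qed

lemma E_H: "m < h \<Longrightarrow> E h g a1 a2 m r = (if r < Suc h then helm (m+1) r else 0)"
  by (simp add: E_def)
lemma E_P: "m < Suc g \<Longrightarrow> E h g a1 a2 (h+m) r = (if r = Suc h+m then 1 else if r = Suc h+Suc g+m then -1 else 0)"
  by (simp add: E_def)
lemma E_G: "m < g \<Longrightarrow> E h g a1 a2 (h+Suc g+m) r = (if Suc h \<le> r then helm (m+1) ((r-Suc h) mod Suc g) else 0)"
  by (simp add: E_def)
lemma E_F1: "E h g a1 a2 (h+Suc g+g) r = (if r < Suc h then a1 else 1)"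
  by (simp add: E_def)
lemma E_F2: "E h g a1 a2 (Suc (h+Suc g+g)) r = (if r < Suc h then a2 else 1)"
  by (simp add: E_def)

lemma lam_H: "m < h \<Longrightarrow> lam h g a1 a2 m = -2" by (simp add: lam_def)
lemma lam_P: "m < Suc g \<Longrightarrow> lam h g a1 a2 (h+m) = -2" by (simp add: lam_def)
lemma lam_G: "m < g \<Longrightarrow> lam h g a1 a2 (Suc (h+g+m)) = 0" by (simp add: lam_def)
lemma lam_F1: "lam h g a1 a2 (Suc (h+g+g)) = real (Suc h) * a1 + 2 * real (Suc g)" by (simp add: lam_def)
lemma lam_F2: "lam h g a1 a2 (Suc (Suc (h+g+g))) = real (Suc h) * a2 + 2 * real (Suc g)" by (simp add: lam_def)

lemma t_cases:
  assumes "t < Suc h + 2 * Suc g"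
  obtains (A) "t < Suc h" | (B) k where "k < Suc g" "t = Suc h + k" | (C) k where "k < Suc g" "t = Suc h + Suc g + k"
proof -
  have "t < Suc h \<or> (Suc h \<le> t \<and> t < Suc h + Suc g) \<or> (Suc h + Suc g \<le> t)" by linarith
  then show ?thesis
  proof (elim disjE conjE)
    assume "Suc h \<le> t" "t < Suc h + Suc g" then show ?thesis using that(2)[of "t - Suc h"] by auto
  next
    assume "Suc h + Suc g \<le> t" then show ?thesis using that(3)[of "t - (Suc h + Suc g)"] assms by auto
  qed (use that in auto)
qed

lemma sucmod: "k < Suc g \<Longrightarrow> Suc (g + k) mod Suc g = k"
  using mod_add_self1[of "Suc g" k] by simp

lemma H_A: "m < h \<Longrightarrow> r < Suc h \<Longrightarrow> E h g a1 a2 m r = helm (Suc m) r" by (simp add: E_def)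
lemma H_B: "m < h \<Longrightarrow> E h g a1 a2 m (Suc (h + k)) = 0" by (simp add: E_def)
lemma H_C: "m < h \<Longrightarrow> E h g a1 a2 m (Suc (Suc (h + g + k))) = 0" by (simp add: E_def)
lemma P_A: "m < Suc g \<Longrightarrow> r < Suc h \<Longrightarrow> E h g a1 a2 (h+m) r = 0" by (simp add: E_def)
lemma P_B: "m < Suc g \<Longrightarrow> k < Suc g \<Longrightarrow> E h g a1 a2 (h+m) (Suc (h + k)) = (if k = m then 1 else 0)"
  by (simp add: E_def)
lemma P_C: "m < Suc g \<Longrightarrow> k < Suc g \<Longrightarrow> E h g a1 a2 (h+m) (Suc (Suc (h + g + k))) = (if k = m then -1 else 0)"
  by (simp add: E_def)
lemma G_A: "m < g \<Longrightarrow> r < Suc h \<Longrightarrow> E h g a1 a2 (Suc (h+g+m)) r = 0" by (simp add: E_def)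
lemma G_B: "m < g \<Longrightarrow> k < Suc g \<Longrightarrow> E h g a1 a2 (Suc (h+g+m)) (Suc (h + k)) = helm (Suc m) k"
  by (simp add: E_def)
lemma G_C: assumes "m < g" "k < Suc g" shows "E h g a1 a2 (Suc (h+g+m)) (Suc (Suc (h + g + k))) = helm (Suc m) k"
proof -
  have "Suc (g + k) mod Suc g = k" using mod_add_self1[of "Suc g" k] assms(2) by simp
  then show ?thesis using assms by (simp add: E_def)
qed
lemma F1_A: "r < Suc h \<Longrightarrow> E h g a1 a2 (Suc (h+g+g)) r = a1" by (simp add: E_def)
lemma F1_B: "E h g a1 a2 (Suc (h+g+g)) (Suc (h + k)) = 1" by (simp add: E_def)
lemma F1_C: "E h g a1 a2 (Suc (h+g+g)) (Suc (Suc (h + g + k))) = 1" by (simp add: E_def)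
lemma F2_A: "r < Suc h \<Longrightarrow> E h g a1 a2 (Suc (Suc (h+g+g))) r = a2" by (simp add: E_def)
lemma F2_B: "E h g a1 a2 (Suc (Suc (h+g+g))) (Suc (h + k)) = 1" by (simp add: E_def)
lemma F2_C: "E h g a1 a2 (Suc (Suc (h+g+g))) (Suc (Suc (h + g + k))) = 1" by (simp add: E_def)

lemma eig:
  fixes h g :: nat and a1 a2 :: real
  assumes t: "t < Suc h + 2*Suc g" and j: "j < Suc h + 2*Suc g"
    and r1: "real (Suc h) * a1^2 + (2 * real (Suc g) - 2 * real (Suc h) + 2) * a1 - 2 * real (Suc g) = 0"
    and r2: "real (Suc h) * a2^2 + (2 * real (Suc g) - 2 * real (Suc h) + 2) * a2 - 2 * real (Suc g) = 0"
  shows "(\<Sum>r<Suc h+2*Suc g. dd (Suc h) (Suc g) t r * E h g a1 a2 j r) = lam h g a1 a2 j * E h g a1 a2 j t"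
proof -
  let ?G = "(\<Sum>r<Suc h + 2 * Suc g. E h g a1 a2 j r) + (if t < Suc h then \<Sum>r<Suc h. E h g a1 a2 j r
        else E h g a1 a2 j (Suc h + (t - Suc h) mod Suc g) + E h g a1 a2 j (Suc h + Suc g + (t - Suc h) mod Suc g)) -
    2 * E h g a1 a2 j t = lam h g a1 a2 j * E h g a1 a2 j t"
  have ?G using j
  proof (cases rule: j_cases)
    case (H m)
    have hs: "(\<Sum>r<Suc h. helm (Suc m) r) = 0" by (rule helm_sum) (use H in simp)
    have s0: "(\<Sum>r<Suc h. E h g a1 a2 j r) = 0" using hs H by (simp add: H_A del: sum.lessThan_Suc)
    have s1: "(\<Sum>k<Suc g. E h g a1 a2 j (Suc h + k)) = 0" using H by (simp add: H_B del: sum.lessThan_Suc)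
    have s2: "(\<Sum>k<Suc g. E h g a1 a2 j (Suc h + Suc g + k)) = 0" using H by (simp add: H_C del: sum.lessThan_Suc)
    have tot: "(\<Sum>r<Suc h + 2*Suc g. E h g a1 a2 j r) = 0" unfolding sum3 s0 s1 s2 by simp
    show ?G unfolding tot s0 using t H
      by (cases rule: t_cases) (simp_all add: H_A H_B H_C lam_H sucmod del: sum.lessThan_Suc)
  next
    case (P m)
    have s0: "(\<Sum>r<Suc h. E h g a1 a2 j r) = 0" using P by (simp add: P_A del: sum.lessThan_Suc)
    have s1: "(\<Sum>k<Suc g. E h g a1 a2 j (Suc h + k)) = 1" using P by (simp add: P_B del: sum.lessThan_Suc)
    have s2: "(\<Sum>k<Suc g. E h g a1 a2 j (Suc h + Suc g + k)) = -1" using P by (simp add: P_C del: sum.lessThan_Suc)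
    have tot: "(\<Sum>r<Suc h + 2*Suc g. E h g a1 a2 j r) = 0" unfolding sum3 s0 s1 s2 by simp
    show ?G unfolding tot s0 using t P
      by (cases rule: t_cases) (simp_all add: P_A P_B P_C lam_P sucmod del: sum.lessThan_Suc)
  next
    case (G m)
    have hs: "(\<Sum>r<Suc g. helm (Suc m) r) = 0" by (rule helm_sum) (use G in simp)
    have s0: "(\<Sum>r<Suc h. E h g a1 a2 j r) = 0" using G by (simp add: G_A del: sum.lessThan_Suc)
    have s1: "(\<Sum>k<Suc g. E h g a1 a2 j (Suc h + k)) = 0" using G hs by (simp add: G_B del: sum.lessThan_Suc)
    have s2: "(\<Sum>k<Suc g. E h g a1 a2 j (Suc h + Suc g + k)) = 0" using G hs by (simp add: G_C del: sum.lessThan_Suc)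
    have tot: "(\<Sum>r<Suc h + 2*Suc g. E h g a1 a2 j r) = 0" unfolding sum3 s0 s1 s2 by simp
    show ?G unfolding tot s0 using t G
      by (cases rule: t_cases) (simp_all add: G_A G_B G_C lam_G sucmod del: sum.lessThan_Suc)
  next
    case F1
    have s0: "(\<Sum>r<Suc h. E h g a1 a2 j r) = real (Suc h) * a1" using F1 by (simp add: F1_A del: sum.lessThan_Suc)
    have s1: "(\<Sum>k<Suc g. E h g a1 a2 j (Suc h + k)) = real (Suc g)" using F1 by (simp add: F1_B del: sum.lessThan_Suc)
    have s2: "(\<Sum>k<Suc g. E h g a1 a2 j (Suc h + Suc g + k)) = real (Suc g)" using F1 by (simp add: F1_C del: sum.lessThan_Suc)
    have tot: "(\<Sum>r<Suc h + 2*Suc g. E h g a1 a2 j r) = real (Suc h) * a1 + 2 * real (Suc g)"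
      unfolding sum3 s0 s1 s2 by simp
    show ?G using t F1
    proof (cases rule: t_cases)
      case A
      have e: "E h g a1 a2 j t = a1" using A F1 by (simp add: F1_A)
      have l: "lam h g a1 a2 j = real (Suc h) * a1 + 2 * real (Suc g)" using F1 by (simp add: lam_F1)
      show ?thesis unfolding tot s0 e l using A r1 by (simp add: power2_eq_square algebra_simps)
    next
      case (B k)
      have m: "(t - Suc h) mod Suc g = k" using B by simp
      have n: "\<not> t < Suc h" using B by simp
      have e: "E h g a1 a2 j (Suc h + k) = 1" "E h g a1 a2 j (Suc h + Suc g + k) = 1" "E h g a1 a2 j t = 1"
        using F1 B by (simp_all add: F1_B F1_C)
      have l: "lam h g a1 a2 j = real (Suc h) * a1 + 2 * real (Suc g)" using F1 by (simp add: lam_F1)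
      show ?thesis unfolding tot m e l using n by simp
    next
      case (C k)
      have m: "(t - Suc h) mod Suc g = k" using C by (simp add: sucmod)
      have n: "\<not> t < Suc h" using C by simp
      have e: "E h g a1 a2 j (Suc h + k) = 1" "E h g a1 a2 j (Suc h + Suc g + k) = 1" "E h g a1 a2 j t = 1"
        using F1 C by (simp_all add: F1_B F1_C)
      have l: "lam h g a1 a2 j = real (Suc h) * a1 + 2 * real (Suc g)" using F1 by (simp add: lam_F1)
      show ?thesis unfolding tot m e l using n by simp
    qed
  next
    case F2
    have s0: "(\<Sum>r<Suc h. E h g a1 a2 j r) = real (Suc h) * a2" using F2 by (simp add: F2_A del: sum.lessThan_Suc)
    have s1: "(\<Sum>k<Suc g. E h g a1 a2 j (Suc h + k)) = real (Suc g)" using F2 by (simp add: F2_B del: sum.lessThan_Suc)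
    have s2: "(\<Sum>k<Suc g. E h g a1 a2 j (Suc h + Suc g + k)) = real (Suc g)" using F2 by (simp add: F2_C del: sum.lessThan_Suc)
    have tot: "(\<Sum>r<Suc h + 2*Suc g. E h g a1 a2 j r) = real (Suc h) * a2 + 2 * real (Suc g)"
      unfolding sum3 s0 s1 s2 by simp
    show ?G using t F2
    proof (cases rule: t_cases)
      case A
      have e: "E h g a1 a2 j t = a2" using A F2 by (simp add: F2_A)
      have l: "lam h g a1 a2 j = real (Suc h) * a2 + 2 * real (Suc g)" using F2 by (simp add: lam_F2)
      show ?thesis unfolding tot s0 e l using A r2 by (simp add: power2_eq_square algebra_simps)
    next
      case (B k)
      have m: "(t - Suc h) mod Suc g = k" using B by simp
      have n: "\<not> t < Suc h" using B by simp
      have e: "E h g a1 a2 j (Suc h + k) = 1" "E h g a1 a2 j (Suc h + Suc g + k) = 1" "E h g a1 a2 j t = 1"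
        using F2 B by (simp_all add: F2_B F2_C)
      have l: "lam h g a1 a2 j = real (Suc h) * a2 + 2 * real (Suc g)" using F2 by (simp add: lam_F2)
      show ?thesis unfolding tot m e l using n by simp
    next
      case (C k)
      have m: "(t - Suc h) mod Suc g = k" using C by (simp add: sucmod)
      have n: "\<not> t < Suc h" using C by simp
      have e: "E h g a1 a2 j (Suc h + k) = 1" "E h g a1 a2 j (Suc h + Suc g + k) = 1" "E h g a1 a2 j t = 1"
        using F2 C by (simp_all add: F2_B F2_C)
      have l: "lam h g a1 a2 j = real (Suc h) * a2 + 2 * real (Suc g)" using F2 by (simp add: lam_F2)
      show ?thesis unfolding tot m e l using n by simp
    qed
  qed
  then show ?thesis unfolding dd_sum[OF t zero_less_Suc, of "E h g a1 a2 j"] .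
qed

lemma sum_delta_mult1: "(k0::nat) < q \<Longrightarrow> (\<Sum>k<q. (if k = k0 then 1 else 0) * f k) = (f k0 :: real)"
  using sum_ind[of k0 q f] by (simp add: eq_commute)
lemma sum_delta_mult2: "(k0::nat) < q \<Longrightarrow> (\<Sum>k<q. f k * (if k = k0 then 1 else 0)) = (f k0 :: real)"
  using sum_delta_mult1[of k0 q f] by (simp add: mult.commute)
lemma sum_delta_mult3: "(k0::nat) < q \<Longrightarrow> (\<Sum>k<q. (if k = k0 then -1 else 0) * f k) = - (f k0 :: real)"
proof -
  assume a: "k0 < q"
  have "(\<Sum>k<q. (if k = k0 then -1 else 0) * f k) = (\<Sum>k<q. if k = k0 then - f k else 0)"
    by (rule sum.cong) auto
  then show ?thesis using a by simp
qed
lemma sum_delta_mult4: "(k0::nat) < q \<Longrightarrow> (\<Sum>k<q. f k * (if k = k0 then -1 else 0)) = - (f k0 :: real)"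
  using sum_delta_mult3[of k0 q f] by (simp add: mult.commute)

lemma orth_blocks:
  fixes h g :: nat and a1 a2 :: real
  assumes j: "j < Suc h + 2*Suc g" and k: "k < Suc h + 2*Suc g" and jk: "j < k"
    and prod: "real (Suc h) * a1 * a2 + 2 * real (Suc g) = 0"
  shows "(\<Sum>r<Suc h. E h g a1 a2 j r * E h g a1 a2 k r) + (\<Sum>i<Suc g. E h g a1 a2 j (Suc h + i) * E h g a1 a2 k (Suc h + i))
     + (\<Sum>i<Suc g. E h g a1 a2 j (Suc h + Suc g + i) * E h g a1 a2 k (Suc h + Suc g + i)) = 0"
  using j
proof (cases rule: j_cases)
  case (H m)
  show ?thesis using k
  proof (cases rule: j_cases)
    case (H m')
    then show ?thesis using \<open>j = m\<close> \<open>m < h\<close> jk by (simp add: H_A H_B H_C helm_orth del: sum.lessThan_Suc)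
  qed (use H jk in \<open>simp_all add: H_A H_B H_C P_A P_B P_C G_A G_B G_C F1_A F1_B F1_C F2_A F2_B F2_C helm_sum sum_distrib_left[symmetric] sum_distrib_right[symmetric] del: sum.lessThan_Suc\<close>)
next
  case (P m)
  show ?thesis using k
  proof (cases rule: j_cases)
    case (P m')
    then show ?thesis using \<open>j = h + m\<close> \<open>m < Suc g\<close> jk by (simp add: P_A P_B P_C sum_delta_mult1 sum_delta_mult3 del: sum.lessThan_Suc)
  qed (use P jk in \<open>simp_all add: P_A P_B P_C G_A G_B G_C F1_A F1_B F1_C F2_A F2_B F2_C sum_delta_mult1 sum_delta_mult2 sum_delta_mult3 sum_delta_mult4 del: sum.lessThan_Suc\<close>)
next
  case (G m)
  show ?thesis using k
  proof (cases rule: j_cases)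
    case (G m')
    then show ?thesis using \<open>j = h + Suc g + m\<close> \<open>m < g\<close> jk by (simp add: G_A G_B G_C helm_orth del: sum.lessThan_Suc)
  qed (use G jk in \<open>simp_all add: G_A G_B G_C F1_A F1_B F1_C F2_A F2_B F2_C helm_sum del: sum.lessThan_Suc\<close>)
next
  case F1
  show ?thesis using k
  proof (cases rule: j_cases)
    case F2
    then show ?thesis using F1 prod by (simp add: F1_A F1_B F1_C F2_A F2_B F2_C del: sum.lessThan_Suc)
  qed (use F1 jk in simp_all)
next
  case F2
  then show ?thesis using k jk by simp
qed

lemma norm_blocks:
  fixes h g :: nat and a1 a2 :: real
  assumes j: "j < Suc h + 2*Suc g"
  shows "(\<Sum>r<Suc h. E h g a1 a2 j r * E h g a1 a2 j r) + (\<Sum>i<Suc g. E h g a1 a2 j (Suc h + i) * E h g a1 a2 j (Suc h + i))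
     + (\<Sum>i<Suc g. E h g a1 a2 j (Suc h + Suc g + i) * E h g a1 a2 j (Suc h + Suc g + i)) > 0"
  using j
proof (cases rule: j_cases)
  case (H m)
  have "(\<Sum>r<Suc h. helm (Suc m) r * helm (Suc m) r) > 0" by (rule helm_sq) (use H in auto)
  then show ?thesis using H by (simp add: H_A H_B H_C del: sum.lessThan_Suc)
next
  case (P m)
  then show ?thesis by (simp add: P_A P_B P_C sum_delta_mult1 sum_delta_mult3 del: sum.lessThan_Suc)
next
  case (G m)
  have "(\<Sum>r<Suc g. helm (Suc m) r * helm (Suc m) r) > 0" by (rule helm_sq) (use G in auto)
  then show ?thesis using G by (simp add: G_A G_B G_C del: sum.lessThan_Suc)
next
  case F1
  have nn: "0 \<le> (1 + real h) * (a1 * a1)" by simp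
  show ?thesis using F1 by (simp add: F1_A F1_B F1_C del: sum.lessThan_Suc) (use nn in linarith)
next
  case F2
  have nn: "0 \<le> (1 + real h) * (a2 * a2)" by simp
  show ?thesis using F2 by (simp add: F2_A F2_B F2_C del: sum.lessThan_Suc) (use nn in linarith)
qed

lemma gram:
  fixes h g :: nat and a1 a2 :: real
  assumes j: "j < Suc h + 2*Suc g" and k: "k < Suc h + 2*Suc g"
    and prod: "real (Suc h) * a1 * a2 + 2 * real (Suc g) = 0"
  shows "(\<Sum>r<Suc h+2*Suc g. E h g a1 a2 j r * E h g a1 a2 k r) =
     (if j = k then (\<Sum>r<Suc h+2*Suc g. E h g a1 a2 j r * E h g a1 a2 j r) else 0)"
    and "(\<Sum>r<Suc h+2*Suc g. E h g a1 a2 j r * E h g a1 a2 j r) > 0"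
proof -
  show "(\<Sum>r<Suc h+2*Suc g. E h g a1 a2 j r * E h g a1 a2 j r) > 0"
    unfolding sum3 by (rule norm_blocks[OF j])
  consider "j = k" | "j < k" | "k < j" by linarith
  then show "(\<Sum>r<Suc h+2*Suc g. E h g a1 a2 j r * E h g a1 a2 k r) =
     (if j = k then (\<Sum>r<Suc h+2*Suc g. E h g a1 a2 j r * E h g a1 a2 j r) else 0)"
  proof cases
    case 2 then show ?thesis unfolding sum3 using orth_blocks[OF j k 2 prod] by simp
  next
    case 3 then show ?thesis unfolding sum3 using orth_blocks[OF k j 3 prod] by (simp add: mult.commute)
  qed simp
qed

lemma charpoly_diag:
  fixes A S :: "real mat" and lam :: "nat \<Rightarrow> real"
  assumes A: "A \<in> carrier_mat N N" and S: "S \<in> carrier_mat N N" and dS: "det S \<noteq> 0"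
    and AS: "A * S = S * mat N N (\<lambda>(i,j). if i = j then lam j else 0)"
  shows "char_poly A = (\<Prod>j<N. [:-lam j, 1:])"
proof -
  define L where "L = mat N N (\<lambda>(i,j). if i = j then lam j else (0::real))"
  have L: "L \<in> carrier_mat N N" by (simp add: L_def)
  from det_non_zero_imp_unit[OF S dS, unfolded Units_def, of "()"]
  obtain B where B: "B \<in> carrier_mat N N" and BS: "B * S = 1\<^sub>m N" and SB: "S * B = 1\<^sub>m N"
    by (auto simp: ring_mat_def)
  have "A = A * (S * B)" using A by (simp add: SB)
  also have "\<dots> = (A * S) * B" using A S B by simp
  also have "\<dots> = S * L * B" using AS by (simp add: L_def)
  finally have AE: "A = S * L * B" .
  have sim: "similar_mat A L"
    by (rule similar_matI[of A L S B N]) (use A L S B SB BS AE in auto)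
  have ut: "upper_triangular L" by (simp add: upper_triangular_def L_def)
  have "char_poly A = char_poly L" by (rule char_poly_similar[OF sim])
  also have "\<dots> = (\<Prod>a\<leftarrow>diag_mat L. [:- a, 1:])" by (rule char_poly_upper_triangular[OF L ut])
  also have "\<dots> = (\<Prod>j<N. [:-lam j, 1:])"
  proof -
    have "diag_mat L = map lam [0..<N]" unfolding diag_mat_def L_def by simp
    then have "(\<Prod>a\<leftarrow>diag_mat L. [:- a, 1:]) = prod_list (map (\<lambda>j. [:-lam j, 1:]) [0..<N])" by (simp add: comp_def)
    also have "\<dots> = (\<Prod>j<N. [:-lam j, 1:])"
      by (subst prod.distinct_set_conv_list[symmetric]) (auto simp: atLeast0LessThan)
    finally show ?thesis .
  qed
  finally show ?thesis .
qed

lemma main_linalg: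
  fixes h g :: nat and a1 a2 :: real and \<sigma> :: "nat \<Rightarrow> nat"
  assumes \<sigma>: "bij_betw \<sigma> {..<Suc h + 2*Suc g} {..<Suc h + 2*Suc g}"
    and r1: "real (Suc h) * a1^2 + (2 * real (Suc g) - 2 * real (Suc h) + 2) * a1 - 2 * real (Suc g) = 0"
    and r2: "real (Suc h) * a2^2 + (2 * real (Suc g) - 2 * real (Suc h) + 2) * a2 - 2 * real (Suc g) = 0"
    and prod: "real (Suc h) * a1 * a2 + 2 * real (Suc g) = 0"
  shows "char_poly (mat (Suc h + 2*Suc g) (Suc h + 2*Suc g) (\<lambda>(i,i'). dd (Suc h) (Suc g) (\<sigma> i) (\<sigma> i')))
      = (\<Prod>j<Suc h + 2*Suc g. [:-lam h g a1 a2 j, 1:])"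
proof -
  define N where "N = Suc h + 2*Suc g"
  define A where "A = mat N N (\<lambda>(i,i'). dd (Suc h) (Suc g) (\<sigma> i) (\<sigma> i'))"
  define S where "S = mat N N (\<lambda>(i,j). E h g a1 a2 j (\<sigma> i))"
  define L where "L = mat N N (\<lambda>(i,j). if i = j then lam h g a1 a2 j else (0::real))"
  have \<sigma>N: "bij_betw \<sigma> {..<N} {..<N}" using \<sigma> by (simp add: N_def)
  have \<sigma>lt: "\<sigma> i < N" if "i < N" for i using \<sigma>N that by (auto simp: bij_betw_def)
  have reidx: "(\<Sum>k<N. f (\<sigma> k)) = (\<Sum>r<N. f r)" for f :: "nat \<Rightarrow> real"
    by (rule sum.reindex_bij_betw[OF \<sigma>N])
  have A: "A \<in> carrier_mat N N" and S: "S \<in> carrier_mat N N" and L: "L \<in> carrier_mat N N"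
    by (simp_all add: A_def S_def L_def)
  have AS: "A * S = S * L"
  proof (rule eq_matI)
    fix i j assume i: "i < dim_row (S * L)" and j: "j < dim_col (S * L)"
    then have i: "i < N" and j: "j < N" using S L by auto
    have "(A * S) $$ (i,j) = (\<Sum>k<N. dd (Suc h) (Suc g) (\<sigma> i) (\<sigma> k) * E h g a1 a2 j (\<sigma> k))"
      using i j by (simp add: A_def S_def scalar_prod_def atLeast0LessThan)
    also have "\<dots> = (\<Sum>r<N. dd (Suc h) (Suc g) (\<sigma> i) r * E h g a1 a2 j r)"
      by (rule reidx)
    also have "\<dots> = lam h g a1 a2 j * E h g a1 a2 j (\<sigma> i)"
      unfolding N_def by (rule eig[OF \<sigma>lt[OF i, unfolded N_def] j[unfolded N_def] r1 r2])
    also have "\<dots> = (S * L) $$ (i,j)"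
    proof -
      have "(S * L) $$ (i,j) = (\<Sum>k<N. E h g a1 a2 k (\<sigma> i) * (if k = j then lam h g a1 a2 j else 0))"
        using i j by (simp add: L_def S_def scalar_prod_def atLeast0LessThan)
      also have "\<dots> = (\<Sum>k<N. if k = j then E h g a1 a2 j (\<sigma> i) * lam h g a1 a2 j else 0)"
        by (rule sum.cong) auto
      also have "\<dots> = lam h g a1 a2 j * E h g a1 a2 j (\<sigma> i)" using j by simp
      finally show ?thesis by simp
    qed
    finally show "(A * S) $$ (i,j) = (S * L) $$ (i,j)" .
  qed (use S L A in auto)
  define Gm where "Gm = transpose_mat S * S"
  have Gm: "Gm \<in> carrier_mat N N" using S by (simp add: Gm_def)
  have Gent: "Gm $$ (j,k) = (\<Sum>r<N. E h g a1 a2 j r * E h g a1 a2 k r)" if "j < N" "k < N" for j k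
  proof -
    have "Gm $$ (j,k) = (\<Sum>i<N. E h g a1 a2 j (\<sigma> i) * E h g a1 a2 k (\<sigma> i))"
      using that by (simp add: Gm_def S_def scalar_prod_def atLeast0LessThan)
    also have "\<dots> = (\<Sum>r<N. E h g a1 a2 j r * E h g a1 a2 k r)" by (rule reidx)
    finally show ?thesis .
  qed
  have ut: "upper_triangular Gm"
    unfolding upper_triangular_def
  proof (intro allI impI)
    fix i j assume i: "i < dim_row Gm" and ji: "j < i"
    then have "i < N" "j < N" using Gm by auto
    then show "Gm $$ (i,j) = 0" using gram(1)[of i h g j a1 a2] ji prod by (simp add: Gent N_def)
  qed
  have "det Gm = prod_list (diag_mat Gm)" by (rule det_upper_triangular[OF ut Gm])
  also have "\<dots> = (\<Prod>i = 0..<N. Gm $$ (i,i))" using Gm by (simp add: prod_list_diag_prod)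
  also have "\<dots> > 0"
  proof (rule prod_pos)
    fix i assume "i \<in> {0..<N}"
    then have "i < N" by simp
    then show "Gm $$ (i,i) > 0" using gram(2)[of i h g i a1 a2] prod by (simp add: Gent N_def)
  qed
  finally have "det Gm \<noteq> 0" by simp
  moreover have "det Gm = det S * det S"
    unfolding Gm_def using S by (simp add: det_mult[of _ N] det_transpose)
  ultimately have dS: "det S \<noteq> 0" by simp
  have "char_poly A = (\<Prod>j<N. [:-lam h g a1 a2 j, 1:])"
    by (rule charpoly_diag[OF A S dS AS[unfolded L_def]])
  then show ?thesis by (simp add: A_def N_def)
qed

lemma prod_add_split: "(\<Prod>r<a+(b::nat). f r) = (\<Prod>r<a. f r) * (\<Prod>k<b. f (a+k))"
  by (induction b) (simp_all add: add.assoc mult.assoc)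

lemma prod_lam:
  "(\<Prod>j<Suc h + 2*Suc g. [:-lam h g a1 a2 j, 1:]) =
     [:2, 1:] ^ (h + Suc g) * [:0, 1:] ^ g * [:-(real (Suc h) * a1 + 2 * real (Suc g)), 1:]
     * [:-(real (Suc h) * a2 + 2 * real (Suc g)), 1:]"
proof -
  have e: "Suc h + 2*Suc g = (h + Suc g) + (g + 2)" by simp
  have p1: "(\<Prod>j<h + Suc g. [:-lam h g a1 a2 j, 1:]) = [:2, 1:] ^ (h + Suc g)"
    by (simp add: lam_def)
  have p2: "(\<Prod>k<g + 2. [:-lam h g a1 a2 (h + Suc g + k), 1:]) =
     [:0, 1:] ^ g * [:-(real (Suc h) * a1 + 2 * real (Suc g)), 1:]
     * [:-(real (Suc h) * a2 + 2 * real (Suc g)), 1:]"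
  proof -
    have "(\<Prod>k<g + 2. [:-lam h g a1 a2 (h + Suc g + k), 1:]) =
      (\<Prod>k<g. [:-lam h g a1 a2 (h + Suc g + k), 1:]) * [:-lam h g a1 a2 (h + Suc g + g), 1:]
        * [:-lam h g a1 a2 (h + Suc g + Suc g), 1:]"
      unfolding add_2_eq_Suc' by (simp only: prod.lessThan_Suc add_Suc_right)
    also have "(\<Prod>k<g. [:-lam h g a1 a2 (h + Suc g + k), 1:]) = [:0, 1:] ^ g"
      by (simp add: lam_def)
    finally show ?thesis by (simp add: lam_def)
  qed
  show ?thesis unfolding e by (simp only: prod_add_split[of _ "h + Suc g" "g + 2"] p1 p2 mult.assoc)
qed

lemma final_linalg:
  fixes n :: nat and \<sigma> :: "nat \<Rightarrow> nat"
  assumes n: "n \<ge> 2" and \<sigma>: "bij_betw \<sigma> {..<4*n-2} {..<4*n-2}"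
  shows "char_poly (mat (4*n-2) (4*n-2) (\<lambda>(i,i'). dd (2*n-2) n (\<sigma> i) (\<sigma> i'))) =
           [:2, 1:] ^ (3 * n - 3) * [:0, 1:] ^ (n - 1)
         * [: -(3 * (real n - 1) + sqrt (5 * (real n)\<^sup>2 - 10 * real n + 9)), 1 :]
         * [: -(3 * (real n - 1) - sqrt (5 * (real n)\<^sup>2 - 10 * real n + 9)), 1 :]"
proof -
  obtain g where g: "n = Suc g" using n by (cases n) auto
  obtain h where h: "2*n-2 = Suc h" using n by (cases "2*n-2") auto
  have N: "4*n-2 = Suc h + 2*Suc g" using g h by simp
  define s where "s = sqrt (5 * (real n)\<^sup>2 - 10 * real n + 9)"
  have s2: "s^2 = 5 * (real n)\<^sup>2 - 10 * real n + 9"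
  proof -
    have "5 * (real n)\<^sup>2 - 10 * real n + 9 = 5 * (real n - 1)^2 + 4" by (simp add: power2_eq_square algebra_simps)
    then have "0 \<le> 5 * (real n)\<^sup>2 - 10 * real n + 9" by (smt (verit) zero_le_power2)
    then show ?thesis unfolding s_def by simp
  qed
  have rn: "real n \<ge> 2" using n by simp
  have hr: "real (Suc h) = 2 * real n - 2" using h[symmetric] n by simp
  have gr: "real (Suc g) = real n" using g by simp
  define a1 where "a1 = ((real n - 3) + s) / (2 * (real n - 1))"
  define a2 where "a2 = ((real n - 3) - s) / (2 * (real n - 1))"
  have nz: "real n - 1 \<noteq> 0" using rn by simp
  have A1: "2 * (real n - 1) * a1 = real n - 3 + s" unfolding a1_def using nz by simp
  have A2: "2 * (real n - 1) * a2 = real n - 3 - s" unfolding a2_def using nz by simp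
  have quad: "(2*real n - 2) * a^2 + (2 * real n - 2 * (2*real n - 2) + 2) * a - 2 * real n = 0"
    if "2 * (real n - 1) * a = real n - 3 + t" "t^2 = s^2" for a t
  proof -
    have "2 * (real n - 1) * ((2*real n - 2) * a^2 + (2 * real n - 2 * (2*real n - 2) + 2) * a - 2 * real n)
       = (2 * (real n - 1) * a - (real n - 3))^2 - (5 * (real n)\<^sup>2 - 10 * real n + 9)"
      by (simp add: algebra_simps power2_eq_square)
    also have "\<dots> = 0" using that s2 by simp
    finally show ?thesis using nz by simp
  qed
  have r1: "real (Suc h) * a1^2 + (2 * real (Suc g) - 2 * real (Suc h) + 2) * a1 - 2 * real (Suc g) = 0"
    unfolding hr gr by (rule quad[of a1 s]) (use A1 in auto)
  have r2: "real (Suc h) * a2^2 + (2 * real (Suc g) - 2 * real (Suc h) + 2) * a2 - 2 * real (Suc g) = 0"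
    unfolding hr gr by (rule quad[of a2 "-s"]) (use A2 in auto)
  have pr: "real (Suc h) * a1 * a2 + 2 * real (Suc g) = 0"
  proof -
    have "(2 * (real n - 1) * a1) * (2 * (real n - 1) * a2) = (real n - 3)^2 - s^2"
      unfolding A1 A2 by (simp add: algebra_simps power2_eq_square)
    also have "\<dots> = - 4 * real n * (real n - 1)" unfolding s2 by (simp add: algebra_simps power2_eq_square)
    finally have X: "(2 * (real n - 1) * a1) * (2 * (real n - 1) * a2) = - 4 * real n * (real n - 1)" .
    have "2 * (real n - 1) * ((2 * real n - 2) * a1 * a2 + 2 * real n) =
       (2 * (real n - 1) * a1) * (2 * (real n - 1) * a2) + 4 * real n * (real n - 1)"
      by (simp add: algebra_simps)
    also have "\<dots> = 0" using X by simp
    finally show ?thesis unfolding hr gr using nz by simp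
  qed
  have l1: "real (Suc h) * a1 + 2 * real (Suc g) = 3 * (real n - 1) + s"
    unfolding hr gr a1_def using nz by (simp add: field_simps)
  have l2: "real (Suc h) * a2 + 2 * real (Suc g) = 3 * (real n - 1) - s"
    unfolding hr gr a2_def using nz by (simp add: field_simps)
  have e1: "h + Suc g = 3*n-3" using g h by simp
  have e2: "g = n - 1" using g by simp
  have "char_poly (mat (4*n-2) (4*n-2) (\<lambda>(i,i'). dd (2*n-2) n (\<sigma> i) (\<sigma> i'))) =
     (\<Prod>j<Suc h + 2*Suc g. [:-lam h g a1 a2 j, 1:])"
    unfolding N h g[symmetric] using main_linalg[OF \<sigma>[unfolded N] r1 r2 pr] g by simp
  also have "\<dots> = [:2, 1:] ^ (3 * n - 3) * [:0, 1:] ^ (n - 1)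
         * [: -(3 * (real n - 1) + s), 1 :] * [: -(3 * (real n - 1) - s), 1 :]"
    unfolding prod_lam l1 l2 e1 e2[symmetric] ..
  finally show ?thesis unfolding s_def .
qed

lemma nc_dist_0: assumes "u \<in> nc_vertices G" shows "nc_dist G u u = 0"
proof -
  have "nc_walk G [u]" using assms by (simp add: nc_walk_def)
  then show ?thesis unfolding nc_dist_def by (intro Least_eq_0) (rule exI[of _ "[u]"], simp)
qed

lemma nc_dist_1: assumes "nc_adj G u v" shows "nc_dist G u v = 1"
proof -
  have uv: "u \<noteq> v" "u \<in> nc_vertices G" "v \<in> nc_vertices G" using assms by (auto simp: nc_adj_def)
  have w: "nc_walk G [u, v]" using assms uv by (auto simp: nc_walk_def less_Suc_eq)
  show ?thesis unfolding nc_dist_def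
  proof (rule Least_equality)
    show "\<exists>p. nc_walk G p \<and> hd p = u \<and> last p = v \<and> length p = Suc 1"
      by (rule exI[of _ "[u,v]"]) (use w in simp)
  next
    fix k assume "\<exists>p. nc_walk G p \<and> hd p = u \<and> last p = v \<and> length p = Suc k"
    then obtain p where p: "nc_walk G p" "hd p = u" "last p = v" "length p = Suc k" by blast
    show "1 \<le> k"
    proof (rule ccontr)
      assume "\<not> 1 \<le> k"
      then have "k = 0" by simp
      with p obtain a where "p = [a]" by (cases p) auto
      with p uv show False by simp
    qed
  qed
qed

lemma nc_dist_2:
  assumes uv: "u \<noteq> v" "u \<in> nc_vertices G" "v \<in> nc_vertices G" "\<not> nc_adj G u v"
    and w: "nc_adj G u w" "nc_adj G w v"
  shows "nc_dist G u v = 2"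
proof -
  have wv: "w \<in> nc_vertices G" using w by (auto simp: nc_adj_def)
  have wk: "nc_walk G [u, w, v]" using uv wv w by (auto simp: nc_walk_def less_Suc_eq)
  show ?thesis unfolding nc_dist_def
  proof (rule Least_equality)
    show "\<exists>p. nc_walk G p \<and> hd p = u \<and> last p = v \<and> length p = Suc 2"
      by (rule exI[of _ "[u,w,v]"]) (use wk in simp)
  next
    fix k assume "\<exists>p. nc_walk G p \<and> hd p = u \<and> last p = v \<and> length p = Suc k"
    then obtain p where p: "nc_walk G p" "hd p = u" "last p = v" "length p = Suc k" by blast
    show "2 \<le> k"
    proof (rule ccontr)
      assume "\<not> 2 \<le> k"
      then have "k = 0 \<or> k = 1" by auto
      then show False
      proof
        assume "k = 0"
        with p obtain a where "p = [a]" by (cases p) auto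
        with p uv show False by simp
      next
        assume "k = 1"
        with p obtain a b where ab: "p = [a, b]"
          by (cases p; cases "tl p") auto
        with p have "nc_adj G a b" by (auto simp: nc_walk_def)
        with ab p uv show False by simp
      qed
    qed
  qed
qed

locale qgrp = group G for G :: "('a, 'b) monoid_scheme" (structure) +
  fixes x y :: 'a and n :: nat
  assumes n2: "n \<ge> 2" and xc: "x \<in> carrier G" and yc: "y \<in> carrier G"
    and gen: "generate G {x, y} = carrier G"
    and x2n: "x [^] (2 * n) = \<one>"
    and xny: "x [^] n = y [^] (2::nat)"
    and yx: "y \<otimes> x = inv x \<otimes> y"
    and fin: "finite (carrier G)" and card4: "card (carrier G) = 4 * n"
begin

definition el :: "int \<Rightarrow> bool \<Rightarrow> 'a" where
  "el a e = (if e then x [^] a \<otimes> y else x [^] a)"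

lemma el_closed[simp]: "el a e \<in> carrier G"
  by (simp add: el_def xc yc)

lemma x_mod: "x [^] (a::int) = x [^] (a mod (2 * int n))"
proof -
  have one: "x [^] (2 * int n) = \<one>" using x2n int_pow_int[of G x "2*n"] by simp
  have "a = 2 * int n * (a div (2 * int n)) + a mod (2 * int n)" by simp
  then have "x [^] a = x [^] (2 * int n * (a div (2 * int n))) \<otimes> x [^] (a mod (2 * int n))"
    by (metis int_pow_mult xc)
  also have "x [^] (2 * int n * (a div (2 * int n))) = \<one>"
  proof -
    have "x [^] (2 * int n * (a div (2 * int n))) = (x [^] (2 * int n)) [^] (a div (2 * int n))"
      by (rule int_pow_pow[OF xc, symmetric])
    then show ?thesis by (simp add: one)
  qed
  finally show ?thesis using xc by simp
qed

lemma y_xnat: "y \<otimes> x [^] (k::nat) = (inv x) [^] k \<otimes> y"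
proof (induction k)
  case 0 then show ?case using yc by simp
next
  case (Suc k)
  have "y \<otimes> x [^] Suc k = (y \<otimes> x [^] k) \<otimes> x" using xc yc by (simp add: m_assoc)
  also have "\<dots> = (inv x) [^] k \<otimes> (y \<otimes> x)" using Suc xc yc by (simp add: m_assoc)
  also have "\<dots> = (inv x) [^] Suc k \<otimes> y" using xc yc by (simp add: yx m_assoc)
  finally show ?case .
qed

lemma y_x: "y \<otimes> x [^] (b::int) = x [^] (-b) \<otimes> y"
proof -
  define k where "k = nat (b mod (2 * int n))"
  have bk: "b mod (2 * int n) = int k" using n2 by (simp add: k_def)
  have "x [^] b = x [^] k" using x_mod[of b] bk by (simp add: int_pow_int)
  moreover have "x [^] (-b) = x [^] (- int k)"
  proof -
    have "(-b) mod (2 * int n) = (- int k) mod (2 * int n)" using bk by (metis mod_minus_eq)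
    then show ?thesis using x_mod[of "-b"] x_mod[of "- int k"] by simp
  qed
  moreover have "x [^] (- int k) = (inv x) [^] k" using xc by (simp add: int_pow_neg_int nat_pow_inv)
  ultimately show ?thesis using y_xnat by simp
qed

lemma yy: "y \<otimes> y = x [^] (int n)"
  using xny yc by (simp add: int_pow_int numeral_2_eq_2)

lemma el_mult: "el a e \<otimes> el b f = el (a + (if e then -b else b) + (if e \<and> f then int n else 0)) (e \<noteq> f)"
proof (cases e; cases f)
  assume "e" "f"
  have "(x [^] a \<otimes> y) \<otimes> (x [^] b \<otimes> y) = x [^] a \<otimes> (y \<otimes> x [^] b) \<otimes> y"
    using xc yc by (simp add: m_assoc)
  also have "\<dots> = x [^] a \<otimes> x [^] (-b) \<otimes> (y \<otimes> y)" using xc yc by (simp add: y_x m_assoc)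
  also have "\<dots> = x [^] (a + - b + int n)" using xc yc int_pow_mult[OF xc, of a "-b"] int_pow_mult[OF xc, of "a + -b" "int n"] by (simp add: yy)
  finally show ?thesis using \<open>e\<close> \<open>f\<close> by (simp add: el_def)
next
  assume "e" "\<not> f"
  have "(x [^] a \<otimes> y) \<otimes> x [^] b = x [^] a \<otimes> (y \<otimes> x [^] b)"
    using xc yc by (simp add: m_assoc)
  also have "\<dots> = x [^] (a + - b) \<otimes> y" using xc yc int_pow_mult[OF xc, of a "-b"] by (simp add: y_x m_assoc)
  finally show ?thesis using \<open>e\<close> \<open>\<not> f\<close> by (simp add: el_def)
next
  assume "\<not> e" "f"
  have "x [^] a \<otimes> (x [^] b \<otimes> y) = x [^] (a + b) \<otimes> y"
    using xc yc by (simp add: m_assoc int_pow_mult)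
  then show ?thesis using \<open>\<not> e\<close> \<open>f\<close> by (simp add: el_def)
next
  assume "\<not> e" "\<not> f"
  then show ?thesis using xc by (simp add: el_def int_pow_mult)
qed

lemma el_mod: "el a e = el (a mod (2 * int n)) e"
  unfolding el_def using x_mod[of a] by simp

definition T :: "'a set" where "T = {u. \<exists>a e. 0 \<le> a \<and> a < 2 * int n \<and> u = el a e}"

lemma n_pos: "0 < n" using n2 by simp

lemma el_T: "el a e \<in> T"
  unfolding T_def using n_pos by (intro CollectI exI[of _ "a mod (2 * int n)"] exI[of _ e]) (simp add: el_mod[of a])

lemma inv_y: "inv y = el (int n) True"
proof (rule inv_equality)
  have "el (int n) True \<otimes> el 0 True = el (2 * int n) False" by (simp add: el_mult)
  also have "\<dots> = el 0 False" using el_mod[of "2 * int n" False] by simp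
  also have "\<dots> = \<one>" by (simp add: el_def)
  finally show "el (int n) True \<otimes> y = \<one>" using yc by (simp add: el_def)
qed (use yc in auto)

lemma carrier_T: "carrier G = T"
proof
  show "T \<subseteq> carrier G" unfolding T_def by auto
  have "generate G {x, y} \<subseteq> T"
  proof
    fix u assume "u \<in> generate G {x, y}"
    then show "u \<in> T"
    proof (induction rule: generate.induct)
      case one
      have "\<one> = el 0 False" by (simp add: el_def)
      then show ?case using el_T by metis
    next
      case (incl h)
      have "x = el 1 False" "y = el 0 True" using xc yc by (simp_all add: el_def)
      then show ?case using incl el_T by (metis empty_iff insert_iff)
    next
      case (inv h)
      have "inv x = el (-1) False" using xc by (simp add: el_def int_pow_neg)
      then show ?case using inv el_T inv_y by (metis empty_iff insert_iff)
    next
      case (eng h1 h2)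
      then show ?case unfolding T_def using el_mult el_T[unfolded T_def] by auto
    qed
  qed
  then show "carrier G \<subseteq> T" using gen by simp
qed

definition phi :: "nat \<Rightarrow> 'a" where "phi r = el (int (r mod (2*n))) (2*n \<le> r)"

lemma phi_el:
  assumes "0 \<le> a" "a < 2 * int n"
  shows "nat a + (if e then 2*n else 0) < 4*n" "phi (nat a + (if e then 2*n else 0)) = el a e"
proof -
  have na: "int (nat a) = a" using assms by simp
  have lt: "nat a < 2*n" using assms na by linarith
  then show "nat a + (if e then 2*n else 0) < 4*n" by auto
  have "(nat a + (if e then 2*n else 0)) mod (2*n) = nat a" using lt by auto
  moreover have "(2*n \<le> nat a + (if e then 2*n else 0)) = e" using lt by auto
  ultimately show "phi (nat a + (if e then 2*n else 0)) = el a e" using na by (simp add: phi_def)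
qed

lemma phi_image: "phi ` {..<4*n} = T"
proof
  show "phi ` {..<4*n} \<subseteq> T" unfolding phi_def using el_T by auto
  show "T \<subseteq> phi ` {..<4*n}"
  proof
    fix u assume "u \<in> T"
    then obtain a e where a: "0 \<le> a" "a < 2 * int n" "u = el a e" unfolding T_def by auto
    then show "u \<in> phi ` {..<4*n}" using phi_el[OF a(1,2), of e]
      by (metis image_eqI lessThan_iff)
  qed
qed

lemma phi_inj: "inj_on phi {..<4*n}"
proof (rule eq_card_imp_inj_on)
  show "card (phi ` {..<4*n}) = card {..<4*n}" using phi_image carrier_T card4 by simp
qed simp

lemma el_inj:
  assumes "0 \<le> a" "a < 2 * int n" "0 \<le> b" "b < 2 * int n" "el a e = el b f"
  shows "a = b \<and> e = f"
proof -
  define r where "r = nat a + (if e then 2*n else 0)"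
  define s where "s = nat b + (if f then 2*n else 0)"
  have rs: "r < 4*n" "s < 4*n"
    using phi_el(1)[OF assms(1,2), of e] phi_el(1)[OF assms(3,4), of f] unfolding r_def s_def by auto
  have pr: "phi r = el a e" using phi_el(2)[OF assms(1,2), of e] unfolding r_def .
  have ps: "phi s = el b f" using phi_el(2)[OF assms(3,4), of f] unfolding s_def .
  have "phi r = phi s" using pr ps assms(5) by simp
  then have "r = s" using inj_onD[OF phi_inj] rs by blast
  then have "nat a + (if e then 2*n else 0) = nat b + (if f then 2*n else 0)" by (simp add: r_def s_def)
  moreover have "int (nat a) = a" "int (nat b) = b" using assms by simp_all
  then have "nat a < 2*n" "nat b < 2*n" using assms by linarith+
  ultimately have "nat a = nat b \<and> e = f" by (cases e; cases f) auto
  then show ?thesis using assms by auto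
qed

lemma el_eq_iff: "el a e = el b f \<longleftrightarrow> e = f \<and> a mod (2 * int n) = b mod (2 * int n)"
proof
  assume "el a e = el b f"
  then have eq: "el (a mod (2 * int n)) e = el (b mod (2 * int n)) f" by (simp only: el_mod[of a e, symmetric] el_mod[of b f, symmetric])
  have "0 \<le> a mod (2 * int n)" "a mod (2 * int n) < 2 * int n"
    "0 \<le> b mod (2 * int n)" "b mod (2 * int n) < 2 * int n" using n_pos by simp_all
  from el_inj[OF this eq] show "e = f \<and> a mod (2 * int n) = b mod (2 * int n)" by simp
next
  assume h: "e = f \<and> a mod (2 * int n) = b mod (2 * int n)"
  have "el a e = el (a mod (2 * int n)) e" by (rule el_mod)
  also have "\<dots> = el (b mod (2 * int n)) f" using h by simp
  also have "\<dots> = el b f" by (rule el_mod[symmetric])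
  finally show "el a e = el b f" .
qed

lemma comm_iff: "el a e \<otimes> el b f = el b f \<otimes> el a e \<longleftrightarrow>
   (if e then (if f then int n dvd (a - b) else int n dvd b) else (if f then int n dvd a else True))"
proof -
  have two: "(2 * int n dvd 2 * c) = (int n dvd c)" for c :: int by simp
  show ?thesis
  proof (cases e; cases f)
    assume "e" "f"
    have d: "(a + - b + int n) - (b + - a + int n) = 2 * (a - b)" by simp
    have "(2 * int n dvd ((a + - b + int n) - (b + - a + int n))) = (int n dvd (a - b))" unfolding d by (rule two)
    then have k: "(2 * int n dvd ((a + - b + int n) - (b + - a + int n))) = (int n dvd (a - b))" .
    have m1: "el a e \<otimes> el b f = el (a + - b + int n) False" using \<open>e\<close> \<open>f\<close> by (simp add: el_mult)
    have m2: "el b f \<otimes> el a e = el (b + - a + int n) False" using \<open>e\<close> \<open>f\<close> by (simp add: el_mult)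
    have "(el a e \<otimes> el b f = el b f \<otimes> el a e) = (int n dvd (a - b))"
      unfolding m1 m2 el_eq_iff mod_eq_dvd_iff k by simp
    then show ?thesis using \<open>e\<close> \<open>f\<close> by simp
  next
    assume "e" "\<not> f"
    have d: "(a + - b) - (b + a) = 2 * (- b)" by simp
    have "(2 * int n dvd ((a + - b) - (b + a))) = (int n dvd (- b))" unfolding d by (rule two)
    then have k: "(2 * int n dvd ((a + - b) - (b + a))) = (int n dvd (- b))" .
    have m1: "el a e \<otimes> el b f = el (a + - b) True" using \<open>e\<close> \<open>\<not> f\<close> by (simp add: el_mult)
    have m2: "el b f \<otimes> el a e = el (b + a) True" using \<open>e\<close> \<open>\<not> f\<close> by (simp add: el_mult)
    have "(el a e \<otimes> el b f = el b f \<otimes> el a e) = (int n dvd (- b))"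
      unfolding m1 m2 el_eq_iff mod_eq_dvd_iff k by simp
    then show ?thesis using \<open>e\<close> \<open>\<not> f\<close> by simp
  next
    assume "\<not> e" "f"
    have d: "(a + b) - (b + - a) = 2 * a" by simp
    have "(2 * int n dvd ((a + b) - (b + - a))) = (int n dvd a)" unfolding d by (rule two)
    then have k: "(2 * int n dvd ((a + b) - (b + - a))) = (int n dvd a)" .
    have m1: "el a e \<otimes> el b f = el (a + b) True" using \<open>\<not> e\<close> \<open>f\<close> by (simp add: el_mult)
    have m2: "el b f \<otimes> el a e = el (b + - a) True" using \<open>\<not> e\<close> \<open>f\<close> by (simp add: el_mult)
    have "(el a e \<otimes> el b f = el b f \<otimes> el a e) = (int n dvd a)"
      unfolding m1 m2 el_eq_iff mod_eq_dvd_iff k by simp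
    then show ?thesis using \<open>\<not> e\<close> \<open>f\<close> by simp
  next
    assume "\<not> e" "\<not> f"
    then have "el a e \<otimes> el b f = el b f \<otimes> el a e" by (simp add: el_mult add.commute)
    then show ?thesis using \<open>\<not> e\<close> \<open>\<not> f\<close> by simp
  qed
qed

definition ea :: "nat \<Rightarrow> int" where "ea r = int (if r < n - 1 then r + 1 else r + 2)"

definition vtx :: "nat \<Rightarrow> 'a" where
  "vtx r = (if r < 2*n-2 then el (ea r) False else el (int (r - (2*n-2))) True)"

lemma ea_ndvd: assumes "r < 2*n-2" shows "\<not> int n dvd ea r"
proof -
  define m where "m = (if r < n - 1 then r + 1 else r + 2)"
  have e: "ea r = int m" by (simp add: ea_def m_def)
  have "\<not> n dvd m"
  proof (cases "r < n - 1")
    case True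
    then have "0 < m" "m < n" by (auto simp: m_def)
    then show ?thesis by (rule nat_dvd_not_less)
  next
    case False
    then have mm: "n < m" "m < 2*n" using assms n2 by (auto simp: m_def)
    show ?thesis
    proof
      assume "n dvd m"
      then have "n dvd (m - n)" by (rule dvd_diff_nat) simp
      moreover have "0 < m - n" "m - n < n" using mm by auto
      ultimately show False using nat_dvd_not_less[of "m - n" n] by blast
    qed
  qed
  then show ?thesis unfolding e by simp
qed

lemma ea_range: assumes "r < 2*n-2" shows "0 \<le> ea r" "ea r < 2 * int n"
  using assms n2 by (auto simp: ea_def)

lemma vtx_A: "r < 2*n-2 \<Longrightarrow> vtx r = el (ea r) False" by (simp add: vtx_def)
lemma vtx_B: "\<not> r < 2*n-2 \<Longrightarrow> vtx r = el (int (r - (2*n-2))) True" by (simp add: vtx_def)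

lemma modn_iff: "((a::nat) mod n = b mod n) = (int n dvd (int a - int b))"
proof -
  have "((a::nat) mod n = b mod n) = (int (a mod n) = int (b mod n))" by simp
  also have "\<dots> = (int a mod int n = int b mod int n)" by (simp add: zmod_int)
  also have "\<dots> = (int n dvd (int a - int b))" by (rule mod_eq_dvd_iff)
  finally show ?thesis .
qed

lemma vtx_comm:
  shows "(vtx r \<otimes> vtx r' = vtx r' \<otimes> vtx r) \<longleftrightarrow>
    (r < 2*n-2 \<and> r' < 2*n-2) \<or> (2*n-2 \<le> r \<and> 2*n-2 \<le> r' \<and> (r-(2*n-2)) mod n = (r'-(2*n-2)) mod n)"
proof (cases "r < 2*n-2"; cases "r' < 2*n-2")
  assume "r < 2*n-2" "r' < 2*n-2"
  then show ?thesis by (simp add: vtx_A comm_iff)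
next
  assume a: "r < 2*n-2" "\<not> r' < 2*n-2"
  have "(vtx r \<otimes> vtx r' = vtx r' \<otimes> vtx r) = (int n dvd ea r)" using a by (simp add: vtx_A vtx_B comm_iff)
  then show ?thesis using ea_ndvd[OF a(1)] a by simp
next
  assume a: "\<not> r < 2*n-2" "r' < 2*n-2"
  have "(vtx r \<otimes> vtx r' = vtx r' \<otimes> vtx r) = (int n dvd ea r')" using a by (simp add: vtx_A vtx_B comm_iff)
  then show ?thesis using ea_ndvd[OF a(2)] a by simp
next
  assume a: "\<not> r < 2*n-2" "\<not> r' < 2*n-2"
  have "(vtx r \<otimes> vtx r' = vtx r' \<otimes> vtx r) = (int n dvd (int (r - (2*n-2)) - int (r' - (2*n-2))))"
    using a by (simp add: vtx_B comm_iff)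
  also have "\<dots> = ((r - (2*n-2)) mod n = (r' - (2*n-2)) mod n)" by (rule modn_iff[symmetric])
  finally show ?thesis using a by simp
qed

lemma ea_inj: assumes "ea r = ea r'" shows "r = r'"
proof -
  have h: "(if r < n - 1 then r + 1 else r + 2) = (if r' < n - 1 then r' + 1 else r' + 2)"
    using assms unfolding ea_def by (simp only: of_nat_eq_iff)
  show ?thesis
  proof (cases "r < n - 1"; cases "r' < n - 1")
    assume "r < n - 1" "r' < n - 1" then show ?thesis using h by simp
  next
    assume "r < n - 1" "\<not> r' < n - 1" then show ?thesis using h by simp
  next
    assume "\<not> r < n - 1" "r' < n - 1" then show ?thesis using h by simp
  next
    assume "\<not> r < n - 1" "\<not> r' < n - 1" then show ?thesis using h by simp
  qed
qed

lemma vtx_inj: "inj_on vtx {..<4*n-2}"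
proof (rule inj_onI)
  fix r r' assume r: "r \<in> {..<4*n-2}" and r': "r' \<in> {..<4*n-2}" and eq: "vtx r = vtx r'"
  show "r = r'"
  proof (cases "r < 2*n-2"; cases "r' < 2*n-2")
    assume a: "r < 2*n-2" "r' < 2*n-2"
    then have "ea r mod (2 * int n) = ea r' mod (2 * int n)" using eq by (simp add: vtx_A el_eq_iff)
    then have "ea r = ea r'" using ea_range[OF a(1)] ea_range[OF a(2)] by simp
    then show ?thesis by (rule ea_inj)
  next
    assume "r < 2*n-2" "\<not> r' < 2*n-2"
    then show ?thesis using eq by (simp add: vtx_A vtx_B el_eq_iff)
  next
    assume "\<not> r < 2*n-2" "r' < 2*n-2"
    then show ?thesis using eq by (simp add: vtx_A vtx_B el_eq_iff)
  next
    assume a: "\<not> r < 2*n-2" "\<not> r' < 2*n-2"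
    have "r - (2*n-2) < 2*n" "r' - (2*n-2) < 2*n" using r r' by auto
    then have b: "int (r - (2*n-2)) < 2 * int n" "int (r' - (2*n-2)) < 2 * int n" by linarith+
    have "int (r - (2*n-2)) mod (2 * int n) = int (r' - (2*n-2)) mod (2 * int n)"
      using eq a by (simp add: vtx_A vtx_B el_eq_iff)
    then have "int (r - (2*n-2)) = int (r' - (2*n-2))" using b by simp
    then show ?thesis using a by simp
  qed
qed

lemma center_iff: "u \<in> grp_center G \<longleftrightarrow> u \<in> carrier G \<and> (\<forall>g\<in>carrier G. u \<otimes> g = g \<otimes> u)"
  by (simp add: grp_center_def)

lemma y_el: "y = el 0 True" using yc by (simp add: el_def)
lemma x_el: "x = el 1 False" using xc by (simp add: el_def)

lemma vtx_image: "vtx ` {..<4*n-2} = nc_vertices G"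
proof
  show "vtx ` {..<4*n-2} \<subseteq> nc_vertices G"
  proof
    fix u assume "u \<in> vtx ` {..<4*n-2}"
    then obtain r where r: "r < 4*n-2" "u = vtx r" by auto
    have uc: "u \<in> carrier G" using r by (simp add: vtx_def)
    have "\<not> (\<forall>g\<in>carrier G. u \<otimes> g = g \<otimes> u)"
    proof (cases "r < 2*n-2")
      case True
      have "u \<otimes> el 0 True \<noteq> el 0 True \<otimes> u" unfolding r(2) using True ea_ndvd by (simp add: vtx_A comm_iff)
      then show ?thesis using el_closed by blast
    next
      case False
      have "\<not> int n dvd 1" using n2 by simp
      then have "u \<otimes> el 1 False \<noteq> el 1 False \<otimes> u" unfolding r(2) using False by (simp add: vtx_B comm_iff)
      then show ?thesis using el_closed by blast
    qed
    then show "u \<in> nc_vertices G" using uc by (simp add: nc_vertices_def center_iff)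
  qed
  show "nc_vertices G \<subseteq> vtx ` {..<4*n-2}"
  proof
    fix u assume u: "u \<in> nc_vertices G"
    then have uc: "u \<in> carrier G" and nz: "\<not> (\<forall>g\<in>carrier G. u \<otimes> g = g \<otimes> u)"
      by (auto simp: nc_vertices_def center_iff)
    obtain a e where a: "0 \<le> a" "a < 2 * int n" "u = el a e" using uc carrier_T unfolding T_def by auto
    show "u \<in> vtx ` {..<4*n-2}"
    proof (cases e)
      case True
      define r where "r = nat a + (2*n-2)"
      have na: "int (nat a) = a" using a by simp
      then have "nat a < 2*n" using a by linarith
      then have "r < 4*n-2" "\<not> r < 2*n-2" using n2 by (auto simp: r_def)
      moreover have "r - (2*n-2) = nat a" by (simp add: r_def)
      then have "vtx r = u" using a True na \<open>\<not> r < 2*n-2\<close> by (simp add: vtx_B)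
      ultimately show ?thesis by auto
    next
      case False
      have "a \<noteq> 0 \<and> a \<noteq> int n"
      proof (rule ccontr)
        assume "\<not> (a \<noteq> 0 \<and> a \<noteq> int n)"
        then have d: "int n dvd a" by auto
        have "\<forall>g\<in>carrier G. u \<otimes> g = g \<otimes> u"
        proof
          fix g assume "g \<in> carrier G"
          then obtain b f where "g = el b f" using carrier_T unfolding T_def by auto
          then show "u \<otimes> g = g \<otimes> u" using a(3) False d by (simp add: comm_iff)
        qed
        then show False using nz by blast
      qed
      then consider "0 < a" "a < int n" | "int n < a" "a < 2 * int n" using a by linarith
      then show ?thesis
      proof cases
        case 1
        define r where "r = nat a - 1"
        have "r < n - 1" using 1 by (simp add: r_def)
        then have "r < 2*n-2" "r < 4*n-2" "ea r = a" using 1 by (auto simp: r_def ea_def)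
        then have "vtx r = u" "r < 4*n-2" using a False by (simp_all add: vtx_A)
        then show ?thesis by auto
      next
        case 2
        define r where "r = nat a - 2"
        have "\<not> r < n - 1" "r < 2*n-2" using 2 n2 by (auto simp: r_def)
        then have "r < 4*n-2" "ea r = a" using 2 by (auto simp: r_def ea_def)
        then have "vtx r = u" "r < 4*n-2" using a False \<open>r < 2*n-2\<close> by (simp_all add: vtx_A)
        then show ?thesis by auto
      qed
    qed
  qed
qed

lemma vtx_V: "r < 4*n-2 \<Longrightarrow> vtx r \<in> nc_vertices G"
  using vtx_image by auto

lemma vtx_dist:
  assumes r: "r < 4*n-2" and r': "r' < 4*n-2"
  shows "nc_dist G (vtx r) (vtx r') = dd (2*n-2) n r r'"
proof -
  have V: "vtx r \<in> nc_vertices G" "vtx r' \<in> nc_vertices G" using vtx_V r r' by auto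
  show ?thesis
  proof (cases "r = r'")
    case True
    then show ?thesis using nc_dist_0[OF V(1)] by (simp add: dd_def)
  next
    case False
    then have ne: "vtx r \<noteq> vtx r'" using vtx_inj r r' by (auto dest: inj_onD)
    show ?thesis
    proof (cases "vtx r \<otimes> vtx r' = vtx r' \<otimes> vtx r")
      case False
      then have "nc_adj G (vtx r) (vtx r')" using V ne by (simp add: nc_adj_def)
      moreover have "dd (2*n-2) n r r' = 1" using False \<open>r \<noteq> r'\<close> unfolding vtx_comm by (auto simp: dd_def)
      ultimately show ?thesis using nc_dist_1 by simp
    next
      case True
      then have cm: "(r < 2*n-2 \<and> r' < 2*n-2) \<or> (2*n-2 \<le> r \<and> 2*n-2 \<le> r' \<and> (r-(2*n-2)) mod n = (r'-(2*n-2)) mod n)"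
        unfolding vtx_comm .
      then have d2: "dd (2*n-2) n r r' = 2" using \<open>r \<noteq> r'\<close> by (auto simp: dd_def)
      have nadj: "\<not> nc_adj G (vtx r) (vtx r')" using True by (simp add: nc_adj_def)
      define w where "w = (if r < 2*n-2 then 2*n-2 else 0)"
      have "2*n-2 < 4*n-2" "0 < 4*n-2" using n2 by linarith+
      then have w: "w < 4*n-2" by (simp add: w_def)
      have wV: "vtx w \<in> nc_vertices G" using vtx_V w by auto
      have c1: "vtx r \<otimes> vtx w \<noteq> vtx w \<otimes> vtx r" unfolding vtx_comm using cm n2 by (auto simp: w_def)
      have c2: "vtx w \<otimes> vtx r' \<noteq> vtx r' \<otimes> vtx w" unfolding vtx_comm using cm n2 by (auto simp: w_def)
      have a1: "nc_adj G (vtx r) (vtx w)" using c1 V wV by (auto simp: nc_adj_def)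
      have a2: "nc_adj G (vtx w) (vtx r')" using c2 V wV by (auto simp: nc_adj_def)
      show ?thesis using nc_dist_2[OF ne V nadj a1 a2] d2 by simp
    qed
  qed
qed

end

theorem theorem3p1:
  fixes G :: "('a, 'b) monoid_scheme" and x y :: 'a and n :: nat and vs :: "'a list"
  assumes "group G"
    and "n \<ge> 2"
    and "x \<in> carrier G" and "y \<in> carrier G"
    and "generate G {x, y} = carrier G"
    and "x [^]\<^bsub>G\<^esub> (2 * n) = \<one>\<^bsub>G\<^esub>"
    and "x [^]\<^bsub>G\<^esub> n = y [^]\<^bsub>G\<^esub> (2::nat)"
    and "y \<otimes>\<^bsub>G\<^esub> x = inv\<^bsub>G\<^esub> x \<otimes>\<^bsub>G\<^esub> y"
    and "finite (carrier G)" and "card (carrier G) = 4 * n"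
    and "distinct vs" and "set vs = nc_vertices G"
  shows "char_poly (nc_dist_matrix G vs) =
           [:2, 1:] ^ (3 * n - 3) * [:0, 1:] ^ (n - 1)
         * [: -(3 * (real n - 1) + sqrt (5 * (real n)\<^sup>2 - 10 * real n + 9)), 1 :]
         * [: -(3 * (real n - 1) - sqrt (5 * (real n)\<^sup>2 - 10 * real n + 9)), 1 :]"
proof -
  have Q: "qgrp G x y n" unfolding qgrp_def qgrp_axioms_def using assms by auto
  interpret Q: qgrp G x y n by (rule Q)
  define N where "N = 4*n-2"
  have dv: "distinct vs" and sv: "set vs = nc_vertices G" using assms by auto
  have img: "Q.vtx ` {..<N} = set vs" unfolding N_def sv by (rule Q.vtx_image)
  have inj: "inj_on Q.vtx {..<N}" unfolding N_def by (rule Q.vtx_inj)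
  have len: "length vs = N"
  proof -
    have "length vs = card (set vs)" using dv by (simp add: distinct_card)
    also have "\<dots> = card (Q.vtx ` {..<N})" using img by simp
    also have "\<dots> = N" using card_image[OF inj] by simp
    finally show ?thesis .
  qed
  define \<sigma> where "\<sigma> i = the_inv_into {..<N} Q.vtx (vs ! i)" for i
  have \<sigma>1: "\<sigma> i < N" "Q.vtx (\<sigma> i) = vs ! i" if "i < N" for i
  proof -
    have "vs ! i \<in> Q.vtx ` {..<N}" using that len img by (metis nth_mem)
    then show "\<sigma> i < N" "Q.vtx (\<sigma> i) = vs ! i"
      unfolding \<sigma>_def using the_inv_into_into[OF inj] f_the_inv_into_f[OF inj] by auto
  qed
  have \<sigma>inj: "inj_on \<sigma> {..<N}"
  proof (rule inj_onI)
    fix i j assume "i \<in> {..<N}" "j \<in> {..<N}" "\<sigma> i = \<sigma> j"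
    then have "vs ! i = vs ! j" using \<sigma>1 by (metis lessThan_iff)
    then show "i = j" using dv len \<open>i \<in> {..<N}\<close> \<open>j \<in> {..<N}\<close> by (simp add: nth_eq_iff_index_eq)
  qed
  have \<sigma>bij: "bij_betw \<sigma> {..<N} {..<N}"
  proof -
    have sub: "\<sigma> ` {..<N} \<subseteq> {..<N}" using \<sigma>1 by auto
    have "card (\<sigma> ` {..<N}) = card {..<N}" using card_image[OF \<sigma>inj] by simp
    then have "\<sigma> ` {..<N} = {..<N}" using sub by (simp add: card_subset_eq)
    then show ?thesis using \<sigma>inj by (simp add: bij_betw_def)
  qed
  have M: "nc_dist_matrix G vs = mat N N (\<lambda>(i,i'). dd (2*n-2) n (\<sigma> i) (\<sigma> i'))"
  proof (rule eq_matI)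
    fix i j assume i: "i < dim_row (mat N N (\<lambda>(i,i'). dd (2*n-2) n (\<sigma> i) (\<sigma> i')))"
      and j: "j < dim_col (mat N N (\<lambda>(i,i'). dd (2*n-2) n (\<sigma> i) (\<sigma> i')))"
    then have i: "i < N" and j: "j < N" by auto
    have "nc_dist_matrix G vs $$ (i,j) = real (nc_dist G (vs ! i) (vs ! j))"
      using i j len by (simp add: nc_dist_matrix_def)
    also have "\<dots> = real (nc_dist G (Q.vtx (\<sigma> i)) (Q.vtx (\<sigma> j)))" using \<sigma>1 i j by simp
    also have "\<dots> = dd (2*n-2) n (\<sigma> i) (\<sigma> j)"
      using Q.vtx_dist[of "\<sigma> i" "\<sigma> j"] \<sigma>1(1)[OF i] \<sigma>1(1)[OF j] unfolding N_def by simp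
    finally show "nc_dist_matrix G vs $$ (i,j) = mat N N (\<lambda>(i,i'). dd (2*n-2) n (\<sigma> i) (\<sigma> i')) $$ (i,j)"
      using i j by simp
  qed (use len in \<open>simp_all add: nc_dist_matrix_def\<close>)
  show ?thesis unfolding M N_def
    by (rule final_linalg[OF assms(2) \<sigma>bij[unfolded N_def]])
qed

end
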